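(* Let $d\ge1$ and let $X_1,\dots,X_n$ be independent random vectors in $\mathbb{R}^d$ with $\mathbb{E}X_i=0$ and $\mathbb{E}\|X_i\|_\infty^2<\infty$, and $S_n:=\sum_{i=1}^nX_i$. Then $$\mathbb{E}\|S_n\|_\infty^2\le\bigl(1+3.46\sqrt{\log(2d)}\bigr)^2\sum_{i=1}^n\mathbb{E}\|X_i\|_\infty^2 .$$ If in addition each $X_i$ is symmetrically distributed around $0$ (i.e. $-X_i$ has the same distribution as $X_i$), then $$\mathbb{E}\|S_n\|_\infty^2\le\bigl(1+2.9\sqrt{\log(2d)}\bigr)^2\sum_{i=1}^n\mathbb{E}\|X_i\|_\infty^2 .$$
   Context: $\|x\|_\infty:=\max_{1\le j\le d}|x_j|$; $\log$ is the natural logarithm. *)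

theory Defs
  imports "HOL-Probability.Probability"
begin

definition linf_norm :: "real ^ 'd \<Rightarrow> real" where
  "linf_norm x = Max (range (\<lambda>j. \<bar>x $ j\<bar>))"

end

theory Submission
  imports Defs
begin

lemma vec_nth_meas[measurable]: "(\<lambda>x::real^'d. x $ j) \<in> borel_measurable borel"
  using bounded_linear_vec_nth[of j] by (simp add: borel_measurable_continuous_onI linear_continuous_on)

lemma bern_aux:
  fixes u :: real assumes "u \<ge> 0"
  shows "real (Suc m) * u ^ m \<le> real m * u ^ Suc m + 1"
proof (induction m)
  case 0 then show ?case by simp
next
  case (Suc m)
  have h: "0 \<le> (u ^ Suc m - 1) * (u - 1)"
  proof (cases "u \<le> 1")
    case True
    then have "u ^ Suc m \<le> 1" by (metis assms True power_le_one)
    then show ?thesis using True by (intro mult_nonpos_nonpos) auto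
  next
    case False
    then have "u ^ Suc m \<ge> 1" by (metis less_imp_le not_le one_le_power)
    then show ?thesis using False by simp
  qed
  have "u * (real (Suc m) * u ^ m) \<le> u * (real m * u ^ Suc m + 1)"
    using Suc assms by (intro mult_left_mono) auto
  then show ?case using h by (simp add: algebra_simps)
qed

lemma bern:
  fixes u :: real assumes "u \<ge> 0" "k \<ge> 1"
  shows "real k * u ^ (k - 1) \<le> (real k - 1) * u ^ k + 1"
proof -
  obtain m where k: "k = Suc m" using assms(2) by (cases k) auto
  show ?thesis using bern_aux[OF assms(1), of m] k by simp
qed

lemma sum_bound:
  fixes z :: "real ^ 'd" and M :: real
  assumes k: "k \<ge> 1" and Mpos: "M > 0" and NM: "(\<Sum>j\<in>UNIV. (z$j)^(2*k)) \<le> M"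
  shows "M powr (1/k - 1) * (\<Sum>j\<in>UNIV. (z$j)^(2*k-2)) \<le> real CARD('d) powr (1/k)"
proof -
  define c where "c = real CARD('d)"
  have cpos: "c > 0" unfolding c_def by simp
  define l where "l = (M/c) powr (1/k)"
  have lpos: "l > 0" using Mpos cpos unfolding l_def by simp
  have lk: "l ^ k = M / c" unfolding l_def using Mpos cpos k
    by (simp add: powr_realpow[symmetric] powr_powr)
  have kpos: "real k > 0" using k by simp
  have each: "l * (z$j)^(2*k-2) \<le> (real k - 1)/k * (z$j)^(2*k) + l^k / k" for j
  proof -
    define w where "w = (z$j)^2"
    have w0: "w \<ge> 0" unfolding w_def by simp
    have b: "real k * (w/l) ^ (k - 1) \<le> (real k - 1) * (w/l) ^ k + 1"
      by (rule bern) (use w0 lpos k in auto)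
    have "l ^ k * (real k * (w/l) ^ (k - 1)) \<le> l ^ k * ((real k - 1) * (w/l) ^ k + 1)"
      using b lpos by (intro mult_left_mono) auto
    moreover have "l ^ k * (w/l) ^ (k - 1) = l * w ^ (k-1)"
    proof -
      have "l ^ k = l * l ^ (k-1)" using k by (simp add: power_eq_if)
      then show ?thesis using lpos by (simp add: power_divide)
    qed
    moreover have "l ^ k * (w/l) ^ k = w ^ k" using lpos by (simp add: power_divide)
    ultimately have "real k * (l * w ^ (k-1)) \<le> (real k - 1) * w ^ k + l^k"
      by (simp add: algebra_simps)
    moreover have "w ^ (k-1) = (z$j)^(2*k-2)" "w ^ k = (z$j)^(2*k)"
    proof -
      have e: "2*k-2 = 2*(k-1)" by simp
      show "w ^ (k-1) = (z$j)^(2*k-2)" unfolding e w_def by (simp only: power_mult)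
      show "w ^ k = (z$j)^(2*k)" unfolding w_def by (simp only: power_mult)
    qed
    ultimately have "real k * (l * (z$j)^(2*k-2)) \<le> (real k - 1) * (z$j)^(2*k) + l^k" by simp
    then show ?thesis using kpos by (simp add: field_simps)
  qed
  have "l * (\<Sum>j\<in>UNIV. (z$j)^(2*k-2)) = (\<Sum>j\<in>UNIV. l * (z$j)^(2*k-2))"
    by (simp add: sum_distrib_left)
  also have "\<dots> \<le> (\<Sum>j\<in>UNIV. (real k - 1)/k * (z$j)^(2*k) + l^k / k)"
    by (intro sum_mono each)
  also have "\<dots> = (real k - 1)/k * (\<Sum>j\<in>UNIV. (z$j)^(2*k)) + c * (l^k / k)"
    by (simp add: sum.distrib sum_distrib_left c_def)
  also have "\<dots> \<le> (real k - 1)/k * M + c * (l^k / k)"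
    using NM k by (intro add_right_mono mult_left_mono) auto
  also have "\<dots> = M" using lk cpos kpos by (simp add: field_simps)
  finally have S: "l * (\<Sum>j\<in>UNIV. (z$j)^(2*k-2)) \<le> M" .
  have "M powr (1/k - 1) * (\<Sum>j\<in>UNIV. (z$j)^(2*k-2)) \<le> M powr (1/k - 1) * (M / l)"
    using S lpos by (intro mult_left_mono) (auto simp: field_simps)
  also have "\<dots> = M powr (1/k) / l"
    using Mpos by (simp add: powr_diff)
  also have "\<dots> = c powr (1/k)"
    unfolding l_def using Mpos cpos by (simp add: powr_divide)
  finally show ?thesis unfolding c_def .
qed

lemma linf_ge: "\<bar>x$j\<bar> \<le> linf_norm x"
  unfolding linf_norm_def by (rule Max_ge) auto

lemma even_pow_nonneg: "0 \<le> (a::real)^(2*k-2)"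
proof -
  have e: "2*k-2 = 2*(k-1)" by simp
  show ?thesis unfolding e power_mult by simp
qed

lemma smooth:
  fixes x y :: "real ^ 'd"
  assumes e: "e > 0" and k: "k \<ge> 1"
  shows "(e + (\<Sum>j\<in>UNIV. ((x+y)$j)^(2*k))) powr (1/k)
     \<le> (e + (\<Sum>j\<in>UNIV. (x$j)^(2*k))) powr (1/k)
       + (\<Sum>j\<in>UNIV. 2 * (e + (\<Sum>i\<in>UNIV. (x$i)^(2*k))) powr (1/k - 1) * (x$j)^(2*k-1) * y$j)
       + (2*real k - 1) * real CARD('d) powr (1/k) * (linf_norm y)\<^sup>2"
proof -
  define M where "M t = e + (\<Sum>j\<in>UNIV. (x$j + t*y$j)^(2*k))" for t
  define P where "P t = (\<Sum>j\<in>UNIV. (x$j + t*y$j)^(2*k-1) * y$j)" for t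
  define Q where "Q t = (\<Sum>j\<in>UNIV. (x$j + t*y$j)^(2*k-2) * (y$j)^2)" for t
  define C where "C = (2*real k - 1) * real CARD('d) powr (1/k) * (linf_norm y)\<^sup>2"
  define \<psi> where "\<psi> t = M t powr (1/k) - C * t^2" for t
  define \<psi>' where "\<psi>' t = 2 * M t powr (1/k-1) * P t - 2*C*t" for t
  have kpos: "real k > 0" using k by simp
  have Mpos: "M t > 0" for t
  proof -
    have "0 \<le> (\<Sum>j\<in>UNIV. (x$j + t*y$j)^(2*k))"
      by (intro sum_nonneg) (simp add: power_mult)
    then show ?thesis unfolding M_def using e by simp
  qed
  have dM: "(M has_real_derivative 2*real k*P t) (at t)" for t
    unfolding M_def[abs_def] P_def
    by (auto intro!: derivative_eq_intros simp: sum_distrib_left algebra_simps)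
  have dP: "(P has_real_derivative (2*real k - 1) * Q t) (at t)" for t
  proof -
    have "2*k-1-1 = 2*k-2" by simp
    moreover have "real (2*k-1) = 2*real k - 1" using k by (simp add: of_nat_diff)
    ultimately show ?thesis
      unfolding P_def[abs_def] Q_def
      by (auto intro!: derivative_eq_intros simp: sum_distrib_left algebra_simps power2_eq_square)
  qed
  have d\<psi>: "(\<psi> has_real_derivative \<psi>' t) (at t)" for t
  proof -
    have "((\<lambda>t. M t powr (1/k)) has_real_derivative (1/k) * M t powr (1/k - 1) * (2*real k*P t)) (at t)"
      by (rule DERIV_chain2[OF has_real_derivative_powr[OF Mpos] dM])
    moreover have "((\<lambda>t. C * t^2) has_real_derivative C * (2 * t)) (at t)"
      by (auto intro!: derivative_eq_intros)
    ultimately have "((\<lambda>t. M t powr (1/k) - C * t^2) has_real_derivative (1/k) * M t powr (1/k - 1) * (2*real k*P t) - C * (2 * t)) (at t)"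
      by (rule DERIV_diff)
    then show ?thesis unfolding \<psi>_def[abs_def] \<psi>'_def using kpos by (simp add: field_simps)
  qed
  define \<psi>'' where "\<psi>'' t = 2 * ((1/k-1) * M t powr (1/k-1-1) * (2*real k*P t)) * P t
      + 2 * M t powr (1/k-1) * ((2*real k - 1) * Q t) - 2*C" for t
  have d\<psi>': "(\<psi>' has_real_derivative \<psi>'' t) (at t)" for t
  proof -
    have "((\<lambda>t. M t powr (1/k-1)) has_real_derivative (1/k-1) * M t powr (1/k - 1 - 1) * (2*real k*P t)) (at t)"
      by (rule DERIV_chain2[OF has_real_derivative_powr[OF Mpos] dM])
    from DERIV_mult[OF DERIV_cmult[OF this, of 2] dP]
    have h: "((\<lambda>t. 2 * M t powr (1/k-1) * P t) has_real_derivative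
       2 * ((1/k-1) * M t powr (1/k-1-1) * (2*real k*P t)) * P t + (2*real k - 1) * Q t * (2 * M t powr (1/k-1))) (at t)" .
    have h2: "((\<lambda>t. 2 * C * t) has_real_derivative 2 * C) (at t)"
      by (auto intro!: derivative_eq_intros)
    show ?thesis unfolding \<psi>'_def[abs_def] \<psi>''_def
      by (rule DERIV_cong[OF DERIV_diff[OF h h2]]) (simp add: algebra_simps)
  qed
  have neg: "\<psi>'' t \<le> 0" for t
  proof -
    have t1: "2 * ((1/k-1) * M t powr (1/k-1-1) * (2*real k*P t)) * P t \<le> 0"
    proof -
      have "(1/k-1) \<le> 0" using k by (simp add: field_simps)
      moreover have "0 \<le> M t powr (1/k-1-1) * (2*real k) * (P t * P t)" using kpos by simp
      ultimately have "(1/k-1) * (M t powr (1/k-1-1) * (2*real k) * (P t * P t)) \<le> 0"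
        by (rule mult_nonpos_nonneg)
      moreover have "2 * ((1/k-1) * M t powr (1/k-1-1) * (2*real k*P t)) * P t
          = 2 * ((1/k-1) * (M t powr (1/k-1-1) * (2*real k) * (P t * P t)))"
        by (simp only: mult_ac)
      ultimately show ?thesis by linarith
    qed
    have Qb: "Q t \<le> (linf_norm y)\<^sup>2 * (\<Sum>j\<in>UNIV. (x$j + t*y$j)^(2*k-2))"
      unfolding Q_def sum_distrib_left
    proof (intro sum_mono)
      fix j
      have "(y$j)^2 \<le> (linf_norm y)^2"
        using linf_ge[of y j] by (metis abs_ge_zero power2_abs power_mono)
      then show "(x$j + t*y$j)^(2*k-2) * (y$j)^2 \<le> (linf_norm y)\<^sup>2 * (x$j + t*y$j)^(2*k-2)"
        using even_pow_nonneg[of "x$j + t*y$j" k] by (metis mult.commute mult_right_mono)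
    qed
    have SB: "M t powr (1/k - 1) * (\<Sum>j\<in>UNIV. ((x + t *\<^sub>R y)$j)^(2*k-2)) \<le> real CARD('d) powr (1/k)"
    proof (rule sum_bound[OF k Mpos])
      show "(\<Sum>j\<in>UNIV. ((x + t *\<^sub>R y)$j)^(2*k)) \<le> M t" unfolding M_def using e by simp
    qed
    have "M t powr (1/k-1) * Q t \<le> M t powr (1/k-1) * ((linf_norm y)\<^sup>2 * (\<Sum>j\<in>UNIV. (x$j + t*y$j)^(2*k-2)))"
      using Qb by (intro mult_left_mono) auto
    also have "\<dots> = (linf_norm y)\<^sup>2 * (M t powr (1/k - 1) * (\<Sum>j\<in>UNIV. ((x + t *\<^sub>R y)$j)^(2*k-2)))"
      by simp
    also have "\<dots> \<le> (linf_norm y)\<^sup>2 * real CARD('d) powr (1/k)"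
      using SB by (intro mult_left_mono) auto
    finally have "M t powr (1/k-1) * Q t \<le> (linf_norm y)\<^sup>2 * real CARD('d) powr (1/k)" .
    then have "(2*real k - 1) * (M t powr (1/k-1) * Q t) \<le> (2*real k - 1) * ((linf_norm y)\<^sup>2 * real CARD('d) powr (1/k))"
      using k by (intro mult_left_mono) auto
    then have "2 * M t powr (1/k-1) * ((2*real k - 1) * Q t) \<le> 2*C"
      unfolding C_def by (simp add: algebra_simps)
    then show ?thesis unfolding \<psi>''_def using t1 by linarith
  qed
  obtain z where z: "0 < z" "z < 1" "\<psi> 1 - \<psi> 0 = (1 - 0) * \<psi>' z"
    using MVT2[of 0 1 \<psi> \<psi>'] d\<psi> by auto
  have "\<psi>' z \<le> \<psi>' 0"
    by (rule DERIV_nonpos_imp_nonincreasing[of 0 z \<psi>']) (use z d\<psi>' neg in auto)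
  then have "\<psi> 1 \<le> \<psi> 0 + \<psi>' 0" using z by simp
  moreover have "\<psi> 1 = (e + (\<Sum>j\<in>UNIV. ((x+y)$j)^(2*k))) powr (1/k) - C"
    unfolding \<psi>_def M_def by simp
  moreover have "\<psi> 0 = (e + (\<Sum>j\<in>UNIV. (x$j)^(2*k))) powr (1/k)"
    unfolding \<psi>_def M_def using k by simp
  moreover have "\<psi>' 0 = (\<Sum>j\<in>UNIV. 2 * (e + (\<Sum>i\<in>UNIV. (x$i)^(2*k))) powr (1/k - 1) * (x$j)^(2*k-1) * y$j)"
    unfolding \<psi>'_def M_def P_def by (simp add: sum_distrib_left mult.assoc)
  ultimately show ?thesis unfolding C_def by simp
qed

lemma lin_aux: fixes s L q r :: real
  assumes "r = 1 + 58 / 10 * s + 841 / 100 * q" "1 / 2 + L \<le> q" "0 \<le> s" "0 \<le> L"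
  shows "(2 * L + 1) * (272 / 100) \<le> r"
  using assms by (simp add: algebra_simps)

lemma const_bound:
  fixes c :: real assumes c: "c \<ge> 1"
  shows "(2*real (max 1 (nat \<lceil>ln c\<rceil>)) - 1) * c powr (1/real (max 1 (nat \<lceil>ln c\<rceil>)))
          \<le> (1 + 2.9 * sqrt (ln (2*c)))\<^sup>2"
proof -
  define k where "k = max 1 (nat \<lceil>ln c\<rceil>)"
  define L where "L = ln c"
  have L0: "L \<ge> 0" unfolding L_def using c by simp
  have k1: "real k \<ge> 1" unfolding k_def by simp
  have hk1: "real k \<ge> L"
  proof -
    have a: "L \<le> of_int \<lceil>L\<rceil>" by (rule le_of_int_ceiling)
    have b: "real_of_int \<lceil>L\<rceil> \<le> real (nat \<lceil>L\<rceil>)" by (cases "\<lceil>L\<rceil> \<ge> 0") auto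
    have "real (nat \<lceil>L\<rceil>) \<le> real k" unfolding k_def L_def by simp
    then show ?thesis using a b by linarith
  qed
  have hk2: "real k \<le> L + 1"
  proof (cases "nat \<lceil>L\<rceil> \<le> 1")
    case True then have "k = 1" unfolding k_def L_def by simp
    then show ?thesis using L0 by simp
  next
    case False then have "k = nat \<lceil>L\<rceil>" unfolding k_def L_def by simp
    then have "real k = real_of_int \<lceil>L\<rceil>" using L0 by simp
    then show ?thesis by linarith
  qed
  have cp: "c powr (1/k) = exp (L / k)" unfolding L_def powr_def using c by simp
  have "L / k \<le> 1" using hk1 k1 by (simp add: field_simps)
  then have E1: "exp (L/k) \<le> exp 1" by (subst exp_le_cancel_iff)
  have E: "c powr (1/k) \<le> (272/100)" using E1 e_less_272 cp by linarith
  have "(2*real k - 1) * c powr (1/k) \<le> (2*L + 1) * (272/100)"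
    using E hk2 k1 by (intro mult_mono) auto
  moreover have "ln 2 \<ge> (1/2::real)" using ln_add1_ge[of 1] by simp
  moreover have "ln (2*c) = ln 2 + L" unfolding L_def using c by (simp add: ln_mult)
  moreover have "sqrt (ln (2*c)) \<ge> 0" using c by (simp add: ln_ge_zero)
  moreover have "(sqrt (ln (2*c)))\<^sup>2 = ln (2*c)"
  proof -
    have "0 \<le> ln (2*c)" using c by (intro ln_ge_zero) simp
    then show ?thesis by simp
  qed
  ultimately have A: "(2*real k - 1) * c powr (1/k) \<le> (2*L + 1) * (272/100)"
    and B: "(sqrt (ln (2*c)))\<^sup>2 \<ge> 1/2 + L" and C: "sqrt (ln (2*c)) \<ge> 0" by auto
  have "(1 + 2.9 * sqrt (ln (2*c)))\<^sup>2 = 1 + (58/10) * sqrt (ln (2*c)) + (841/100) * (sqrt (ln (2*c)))\<^sup>2"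
    by (simp add: power2_eq_square algebra_simps)
  then have "(1 + 2.9 * sqrt (ln (2*c)))\<^sup>2 \<ge> (2*L + 1) * (272/100)"
    by (rule lin_aux[OF _ B C L0])
  then show ?thesis using A unfolding k_def by linarith
qed

definition NN :: "nat \<Rightarrow> real^'d \<Rightarrow> real" where
  "NN k x = (\<Sum>j\<in>UNIV. (x$j)^(2*k))"
definition HH :: "real \<Rightarrow> nat \<Rightarrow> real^'d \<Rightarrow> real" where
  "HH e k x = (e + NN k x) powr (1/real k)"
definition GG :: "real \<Rightarrow> nat \<Rightarrow> real^'d \<Rightarrow> 'd \<Rightarrow> real" where
  "GG e k x j = 2 * (e + NN k x) powr (1/real k - 1) * (x$j)^(2*k-1)"

lemma NN_nonneg: "0 \<le> NN k x"
  unfolding NN_def by (intro sum_nonneg) (simp add: power_mult)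

lemma NN_ge: "(x$j)^(2*k) \<le> NN k x"
  unfolding NN_def by (rule member_le_sum) (auto simp: power_mult)

lemma HH_nonneg: "0 \<le> HH e k x"
  unfolding HH_def by simp

lemma HH_smooth:
  fixes x y :: "real^'d"
  assumes "e > 0" "k \<ge> 1"
  shows "HH e k (x+y) \<le> HH e k x + (\<Sum>j\<in>UNIV. GG e k x j * y$j)
       + (2*real k - 1) * real CARD('d) powr (1/k) * (linf_norm y)\<^sup>2"
  using smooth[OF assms, of x y] unfolding HH_def GG_def NN_def .

lemma pow_root:
  fixes a :: real assumes "a \<ge> 0" "k \<ge> 1"
  shows "(a^k) powr (1/real k) = a"
proof (cases "a = 0")
  case True then show ?thesis using assms by simp
next
  case False then have "a > 0" using assms by simp
  then show ?thesis using assms by (simp add: powr_realpow[symmetric] powr_powr)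
qed

lemma linf_le_HH:
  assumes e: "e > 0" and k: "k \<ge> 1"
  shows "(linf_norm x)\<^sup>2 \<le> HH e k x"
proof -
  have "linf_norm x \<in> range (\<lambda>j. \<bar>x$j\<bar>)" unfolding linf_norm_def by (rule Max_in) auto
  then obtain j where j: "linf_norm x = \<bar>x$j\<bar>" by auto
  have "(linf_norm x)\<^sup>2 = (((x$j)^2)^k) powr (1/real k)"
    using j pow_root[of "(x$j)^2" k] k by simp
  also have "\<dots> \<le> (e + NN k x) powr (1/real k)"
  proof (rule powr_mono2)
    have "((x$j)^2)^k = (x$j)^(2*k)" by (simp add: power_mult)
    then show "((x$j)^2)^k \<le> e + NN k x" using NN_ge[of x j k] e by simp
  qed auto
  finally show ?thesis unfolding HH_def .
qed

lemma GG_bound: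
  assumes e: "e > 0" and k: "k \<ge> 1"
  shows "\<bar>GG e k x j\<bar> \<le> 2 * (1 + HH e k x)"
proof -
  define M where "M = e + NN k x"
  have Mpos: "M > 0" unfolding M_def using e NN_nonneg[of k x] by simp
  define w where "w = \<bar>x$j\<bar>"
  have w0: "w \<ge> 0" unfolding w_def by simp
  have hw: "w^(2*k) \<le> M"
  proof -
    have "w^(2*k) = (x$j)^(2*k)" unfolding w_def by (simp add: power_mult)
    then show ?thesis unfolding M_def using NN_ge[of x j k] e by simp
  qed
  have kpos: "real k > 0" using k by simp
  have abs: "\<bar>GG e k x j\<bar> = 2 * (M powr (1/real k - 1) * w^(2*k-1))"
    unfolding GG_def M_def w_def by (simp add: abs_mult power_abs)
  have claim: "M powr (1/real k - 1) * w^(2*k-1) \<le> M powr (1/(2*real k))"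
  proof (cases "w = 0")
    case True
    obtain p where "2*k-1 = Suc p" using k by (cases "2*k-1") auto
    then show ?thesis using True by simp
  next
    case False
    then have wpos: "w > 0" using w0 by simp
    have "w = (w powr (2*real k)) powr (1/(2*real k))"
      using wpos kpos by (simp add: powr_powr)
    also have "\<dots> \<le> M powr (1/(2*real k))"
    proof (rule powr_mono2)
      show "w powr (2*real k) \<le> M" using hw wpos by (simp add: powr_realpow[symmetric])
    qed (use kpos in auto)
    finally have w1: "w \<le> M powr (1/(2*real k))" .
    have "w^(2*k-1) = w powr real (2*k-1)" using wpos by (simp add: powr_realpow)
    also have "\<dots> \<le> (M powr (1/(2*real k))) powr real (2*k-1)"
      by (rule powr_mono2) (use w1 wpos in auto)
    also have "\<dots> = M powr ((2*real k - 1)/(2*real k))"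
      using k by (simp add: powr_powr of_nat_diff)
    finally have "M powr (1/real k - 1) * w^(2*k-1) \<le> M powr (1/real k - 1) * M powr ((2*real k - 1)/(2*real k))"
      by (intro mult_left_mono) auto
    also have "\<dots> = M powr (1/real k - 1 + (2*real k - 1)/(2*real k))"
      by (simp add: powr_add)
    also have "1/real k - 1 + (2*real k - 1)/(2*real k) = 1/(2*real k)"
      using kpos by (simp add: field_simps)
    finally show ?thesis .
  qed
  define a where "a = M powr (1/(2*real k))"
  have a0: "a \<ge> 0" unfolding a_def by simp
  have aa: "a * a = M powr (1/real k)" unfolding a_def
    by (simp add: powr_add[symmetric])
  have "a \<le> 1 + a * a"
  proof -
    have "0 \<le> (a - 1) * (a - 1)" by simp
    then show ?thesis using a0 by (simp add: algebra_simps)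
  qed
  then have "M powr (1/(2*real k)) \<le> 1 + HH e k x"
    unfolding HH_def M_def[symmetric] using aa a_def by simp
  then show ?thesis using abs claim by (smt (verit))
qed

lemma HH_meas[measurable]:
  "(HH e k :: real^'d \<Rightarrow> real) \<in> borel_measurable borel"
  unfolding HH_def[abs_def] NN_def by measurable

lemma GG_meas[measurable]:
  "(\<lambda>x::real^'d. GG e k x j) \<in> borel_measurable borel"
  unfolding GG_def[abs_def] NN_def by measurable

lemma linf_meas[measurable]:
  "(linf_norm :: real^'d \<Rightarrow> real) \<in> borel_measurable borel"
  unfolding linf_norm_def[abs_def] by measurable

lemma sq_aux: "(a::real) \<le> 1 + a\<^sup>2"
proof -
  have "0 \<le> (a-1)\<^sup>2" "0 \<le> a\<^sup>2" by simp_all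
  moreover have "(a-1)\<^sup>2 = a\<^sup>2 - 2*a + 1" by (simp add: power2_diff)
  ultimately show ?thesis by linarith
qed

context prob_space
begin

lemma vec_integrable:
  fixes Y :: "'a \<Rightarrow> real^'d"
  assumes Ym: "Y \<in> borel_measurable M" and sq: "integrable M (\<lambda>\<omega>. (linf_norm (Y \<omega>))\<^sup>2)"
  shows "integrable M Y" and "\<And>j. integrable M (\<lambda>\<omega>. Y \<omega> $ j)"
proof -
  have b: "\<bar>Y \<omega> $ j\<bar> \<le> 1 + (linf_norm (Y \<omega>))\<^sup>2" for \<omega> j
  proof -
    have "\<bar>Y \<omega> $ j\<bar> \<le> linf_norm (Y \<omega>)" by (rule linf_ge)
    moreover have "linf_norm (Y \<omega>) \<le> 1 + (linf_norm (Y \<omega>))\<^sup>2"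
      by (rule sq_aux)
    ultimately show ?thesis by linarith
  qed
  have i1: "integrable M (\<lambda>\<omega>. 1 + (linf_norm (Y \<omega>))\<^sup>2)"
    using sq by (intro Bochner_Integration.integrable_add) auto
  show ij: "integrable M (\<lambda>\<omega>. Y \<omega> $ j)" for j
  proof (rule Bochner_Integration.integrable_bound[OF i1])
    show "(\<lambda>\<omega>. Y \<omega> $ j) \<in> borel_measurable M" using Ym by measurable
    show "AE \<omega> in M. norm (Y \<omega> $ j) \<le> norm (1 + (linf_norm (Y \<omega>))\<^sup>2)"
    proof (rule AE_I2)
      fix \<omega> have "0 \<le> 1 + (linf_norm (Y \<omega>))\<^sup>2" by (simp add: add_nonneg_nonneg)
      then show "norm (Y \<omega> $ j) \<le> norm (1 + (linf_norm (Y \<omega>))\<^sup>2)" using b[of \<omega> j] by simp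
    qed
  qed
  have "integrable M (\<lambda>\<omega>. \<Sum>j\<in>UNIV. \<bar>Y \<omega> $ j\<bar>)"
    using ij by (intro Bochner_Integration.integrable_sum integrable_abs) auto
  then show "integrable M Y"
  proof (rule Bochner_Integration.integrable_bound)
    show "Y \<in> borel_measurable M" by fact
    show "AE \<omega> in M. norm (Y \<omega>) \<le> norm (\<Sum>j\<in>UNIV. \<bar>Y \<omega> $ j\<bar>)"
    proof (rule AE_I2)
      fix \<omega> have "0 \<le> (\<Sum>j\<in>UNIV. \<bar>Y \<omega> $ j\<bar>)" by (simp add: sum_nonneg)
      then show "norm (Y \<omega>) \<le> norm (\<Sum>j\<in>UNIV. \<bar>Y \<omega> $ j\<bar>)" using norm_le_l1_cart[of "Y \<omega>"] by simp
    qed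
  qed
qed


lemma indep_GG:
  fixes X :: "nat \<Rightarrow> 'a \<Rightarrow> real^'d"
  assumes indep: "indep_vars (\<lambda>_. borel) X {1..n}" and mn: "Suc m \<le> n"
  shows "indep_var borel (\<lambda>\<omega>. GG e k (\<Sum>i\<in>{1..m}. X i \<omega>) j) borel (\<lambda>\<omega>. X (Suc m) \<omega> $ j')"
proof -
  have "indep_var borel ((\<lambda>f. GG e k (\<Sum>i\<in>{1..m}. f i) j) \<circ> (\<lambda>\<omega>. restrict (\<lambda>i. X i \<omega>) {1..m}))
      borel ((\<lambda>f. f (Suc m) $ j') \<circ> (\<lambda>\<omega>. restrict (\<lambda>i. X i \<omega>) {Suc m}))"
    using mn by (intro indep_var_compose[OF indep_var_restrict[OF indep]]) auto
  also have "((\<lambda>f. GG e k (\<Sum>i\<in>{1..m}. f i) j) \<circ> (\<lambda>\<omega>. restrict (\<lambda>i. X i \<omega>) {1..m}))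
      = (\<lambda>\<omega>. GG e k (\<Sum>i\<in>{1..m}. X i \<omega>) j)"
    by (auto simp: comp_def intro!: ext arg_cong[where f="\<lambda>x. GG e k x j"] sum.cong)
  also have "((\<lambda>f. f (Suc m) $ j') \<circ> (\<lambda>\<omega>. restrict (\<lambda>i. X i \<omega>) {Suc m})) = (\<lambda>\<omega>. X (Suc m) \<omega> $ j')"
    by auto
  finally show ?thesis .
qed

lemma main_ind:
  fixes X :: "nat \<Rightarrow> 'a \<Rightarrow> real^'d"
  assumes indep: "indep_vars (\<lambda>_. borel) X {1..n}"
    and mean0: "\<And>i. i \<in> {1..n} \<Longrightarrow> expectation (X i) = 0"
    and sq: "\<And>i. i \<in> {1..n} \<Longrightarrow> integrable M (\<lambda>\<omega>. (linf_norm (X i \<omega>))\<^sup>2)"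
    and e: "e > 0" and k: "k \<ge> 1"
  shows "m \<le> n \<Longrightarrow> integrable M (\<lambda>\<omega>. HH e k (\<Sum>i\<in>{1..m}. X i \<omega>)) \<and>
     expectation (\<lambda>\<omega>. HH e k (\<Sum>i\<in>{1..m}. X i \<omega>)) \<le> e powr (1/real k)
       + (2*real k - 1) * real CARD('d) powr (1/real k) * (\<Sum>i\<in>{1..m}. expectation (\<lambda>\<omega>. (linf_norm (X i \<omega>))\<^sup>2))"
proof (induction m)
  case 0
  have z: "(0::real)^(2*k) = 0" using k by (simp add: power_0_left)
  have "HH e k (0::real^'d) = e powr (1/real k)" unfolding HH_def NN_def using k by (cases k) auto
  then show ?case by (simp add: prob_space)
next
  case (Suc m)
  have mn: "m \<le> n" using Suc.prems by simp
  note IH = Suc.IH[OF mn]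
  define C where "C = (2*real k - 1) * real CARD('d) powr (1/real k)"
  have Xm: "X i \<in> borel_measurable M" if "i \<in> {1..n}" for i
    using indep that unfolding indep_vars_def by auto
  define S where "S \<omega> = (\<Sum>i\<in>{1..m}. X i \<omega>)" for \<omega>
  define Y where "Y = X (Suc m)"
  have SnM: "Suc m \<in> {1..n}" using Suc.prems by simp
  have Sm: "S \<in> borel_measurable M" unfolding S_def[abs_def]
    by (rule borel_measurable_sum) (use Xm mn in auto)
  have Ym: "Y \<in> borel_measurable M" unfolding Y_def using Xm[OF SnM] .
  have Ysq: "integrable M (\<lambda>\<omega>. (linf_norm (Y \<omega>))\<^sup>2)" unfolding Y_def using sq[OF SnM] .
  have sumeq: "(\<Sum>i\<in>{1..Suc m}. X i \<omega>) = S \<omega> + Y \<omega>" for \<omega>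
    unfolding S_def Y_def by (simp add: sum.cl_ivl_Suc)
  have iH: "integrable M (\<lambda>\<omega>. HH e k (S \<omega>))" using IH unfolding S_def by simp
  have EH: "expectation (\<lambda>\<omega>. HH e k (S \<omega>)) \<le> e powr (1/real k)
       + C * (\<Sum>i\<in>{1..m}. expectation (\<lambda>\<omega>. (linf_norm (X i \<omega>))\<^sup>2))"
    using IH unfolding S_def C_def by simp
  have iGG: "integrable M (\<lambda>\<omega>. GG e k (S \<omega>) j)" for j
  proof (rule Bochner_Integration.integrable_bound)
    show "integrable M (\<lambda>\<omega>. 2 * (1 + HH e k (S \<omega>)))" using iH by simp
    show "(\<lambda>\<omega>. GG e k (S \<omega>) j) \<in> borel_measurable M" using Sm by measurable
    show "AE \<omega> in M. norm (GG e k (S \<omega>) j) \<le> norm (2 * (1 + HH e k (S \<omega>)))"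
    proof (rule AE_I2)
      fix \<omega> have "0 \<le> 2 * (1 + HH e k (S \<omega>))" using HH_nonneg[of e k "S \<omega>"] by simp
      then show "norm (GG e k (S \<omega>) j) \<le> norm (2 * (1 + HH e k (S \<omega>)))"
        using GG_bound[OF e k, of "S \<omega>" j] by simp
    qed
  qed
  have iY: "integrable M Y" and iYj: "\<And>j. integrable M (\<lambda>\<omega>. Y \<omega> $ j)"
    using vec_integrable[OF Ym Ysq] by auto
  have EYj: "expectation (\<lambda>\<omega>. Y \<omega> $ j) = 0" for j
  proof -
    have "expectation (\<lambda>\<omega>. Y \<omega> $ j) = (expectation Y) $ j"
      by (rule integral_bounded_linear[OF bounded_linear_vec_nth iY])
    then show ?thesis using mean0[OF SnM] unfolding Y_def by simp
  qed
  have ind: "indep_var borel (\<lambda>\<omega>. GG e k (S \<omega>) j) borel (\<lambda>\<omega>. Y \<omega> $ j)" for j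
    unfolding S_def[abs_def] Y_def by (rule indep_GG[OF indep Suc.prems])
  have iP: "integrable M (\<lambda>\<omega>. GG e k (S \<omega>) j * Y \<omega> $ j)" for j
    by (rule indep_var_integrable[OF ind iGG iYj])
  have EP: "expectation (\<lambda>\<omega>. GG e k (S \<omega>) j * Y \<omega> $ j) = 0" for j
    using indep_var_lebesgue_integral[OF ind iGG iYj] EYj by simp
  define R where "R \<omega> = HH e k (S \<omega>) + (\<Sum>j\<in>UNIV. GG e k (S \<omega>) j * Y \<omega> $ j) + C * (linf_norm (Y \<omega>))\<^sup>2" for \<omega>
  have iR: "integrable M R" unfolding R_def[abs_def]
    using iH iP Ysq by (intro Bochner_Integration.integrable_add Bochner_Integration.integrable_sum integrable_mult_right) auto
  have ER: "expectation R = expectation (\<lambda>\<omega>. HH e k (S \<omega>)) + C * expectation (\<lambda>\<omega>. (linf_norm (Y \<omega>))\<^sup>2)"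
  proof -
    have "expectation R = expectation (\<lambda>\<omega>. HH e k (S \<omega>)) + expectation (\<lambda>\<omega>. \<Sum>j\<in>UNIV. GG e k (S \<omega>) j * Y \<omega> $ j)
       + expectation (\<lambda>\<omega>. C * (linf_norm (Y \<omega>))\<^sup>2)"
      unfolding R_def[abs_def] using iH iP Ysq
      by (subst Bochner_Integration.integral_add; (intro Bochner_Integration.integrable_add Bochner_Integration.integrable_sum integrable_mult_right)?; auto)
    also have "expectation (\<lambda>\<omega>. \<Sum>j\<in>UNIV. GG e k (S \<omega>) j * Y \<omega> $ j) = 0"
      using iP EP by (subst Bochner_Integration.integral_sum) auto
    finally show ?thesis by simp
  qed
  have pw: "HH e k (S \<omega> + Y \<omega>) \<le> R \<omega>" for \<omega>
    unfolding R_def C_def by (rule HH_smooth[OF e k])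
  have iL: "integrable M (\<lambda>\<omega>. HH e k (S \<omega> + Y \<omega>))"
  proof (rule Bochner_Integration.integrable_bound[OF iR])
    show "(\<lambda>\<omega>. HH e k (S \<omega> + Y \<omega>)) \<in> borel_measurable M" using Sm Ym by measurable
    show "AE \<omega> in M. norm (HH e k (S \<omega> + Y \<omega>)) \<le> norm (R \<omega>)"
    proof (rule AE_I2)
      fix \<omega> show "norm (HH e k (S \<omega> + Y \<omega>)) \<le> norm (R \<omega>)"
        using pw[of \<omega>] HH_nonneg[of e k "S \<omega> + Y \<omega>"] by simp
    qed
  qed
  have "expectation (\<lambda>\<omega>. HH e k (S \<omega> + Y \<omega>)) \<le> expectation R"
    by (rule integral_mono[OF iL iR pw])
  also have "\<dots> \<le> e powr (1/real k) + C * (\<Sum>i\<in>{1..m}. expectation (\<lambda>\<omega>. (linf_norm (X i \<omega>))\<^sup>2))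
      + C * expectation (\<lambda>\<omega>. (linf_norm (Y \<omega>))\<^sup>2)"
    using ER EH by simp
  also have "\<dots> = e powr (1/real k) + C * (\<Sum>i\<in>{1..Suc m}. expectation (\<lambda>\<omega>. (linf_norm (X i \<omega>))\<^sup>2))"
    unfolding Y_def by (simp add: sum.cl_ivl_Suc algebra_simps)
  finally show ?case using iL unfolding sumeq C_def by simp
qed

end

theorem theorem2:
  fixes M :: "'a measure" and n :: nat and X :: "nat \<Rightarrow> 'a \<Rightarrow> real ^ 'd"
  assumes "prob_space M"
    and indep: "prob_space.indep_vars M (\<lambda>_. borel) X {1..n}"
    and mean0: "\<And>i. i \<in> {1..n} \<Longrightarrow> prob_space.expectation M (X i) = 0"
    and sq: "\<And>i. i \<in> {1..n} \<Longrightarrow> integrable M (\<lambda>\<omega>. (linf_norm (X i \<omega>))\<^sup>2)"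
  shows "prob_space.expectation M (\<lambda>\<omega>. (linf_norm (\<Sum>i\<in>{1..n}. X i \<omega>))\<^sup>2)
           \<le> (1 + 3.46 * sqrt (ln (2 * real CARD('d))))\<^sup>2 *
             (\<Sum>i\<in>{1..n}. prob_space.expectation M (\<lambda>\<omega>. (linf_norm (X i \<omega>))\<^sup>2))
         \<and> ((\<forall>i\<in>{1..n}. distr M borel (\<lambda>\<omega>. - X i \<omega>) = distr M borel (X i)) \<longrightarrow>
           prob_space.expectation M (\<lambda>\<omega>. (linf_norm (\<Sum>i\<in>{1..n}. X i \<omega>))\<^sup>2)
           \<le> (1 + 2.9 * sqrt (ln (2 * real CARD('d))))\<^sup>2 *
             (\<Sum>i\<in>{1..n}. prob_space.expectation M (\<lambda>\<omega>. (linf_norm (X i \<omega>))\<^sup>2)))"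
proof -
  interpret prob_space M by fact
  have indep': "indep_vars (\<lambda>_. borel) X {1..n}" using indep by simp
  define c where "c = real CARD('d)"
  define k where "k = max 1 (nat \<lceil>ln c\<rceil>)"
  have k1: "k \<ge> 1" unfolding k_def by simp
  define C where "C = (2*real k - 1) * c powr (1/real k)"
  define T where "T = (\<Sum>i\<in>{1..n}. expectation (\<lambda>\<omega>. (linf_norm (X i \<omega>))\<^sup>2))"
  define S where "S \<omega> = (\<Sum>i\<in>{1..n}. X i \<omega>)" for \<omega>
  have Xm: "X i \<in> borel_measurable M" if "i \<in> {1..n}" for i
    using indep that unfolding indep_vars_def by auto
  have Sm: "S \<in> borel_measurable M" unfolding S_def[abs_def]
    by (rule borel_measurable_sum) (use Xm in auto)
  have key: "expectation (\<lambda>\<omega>. (linf_norm (S \<omega>))\<^sup>2) \<le> e powr (1/real k) + C * T" if e: "e > 0" for e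
  proof -
    have mi: "integrable M (\<lambda>\<omega>. HH e k (S \<omega>)) \<and>
       expectation (\<lambda>\<omega>. HH e k (S \<omega>)) \<le> e powr (1/real k) + C * T"
      using main_ind[OF indep' mean0 sq e k1, of n] unfolding S_def C_def T_def c_def by simp
    have iL: "integrable M (\<lambda>\<omega>. (linf_norm (S \<omega>))\<^sup>2)"
    proof (rule Bochner_Integration.integrable_bound)
      show "integrable M (\<lambda>\<omega>. HH e k (S \<omega>))" using mi by simp
      show "(\<lambda>\<omega>. (linf_norm (S \<omega>))\<^sup>2) \<in> borel_measurable M" using Sm by measurable
      show "AE \<omega> in M. norm ((linf_norm (S \<omega>))\<^sup>2) \<le> norm (HH e k (S \<omega>))"
      proof (rule AE_I2)
        fix \<omega> show "norm ((linf_norm (S \<omega>))\<^sup>2) \<le> norm (HH e k (S \<omega>))"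
          using linf_le_HH[OF e k1, of "S \<omega>"] HH_nonneg[of e k "S \<omega>"] by simp
      qed
    qed
    have "expectation (\<lambda>\<omega>. (linf_norm (S \<omega>))\<^sup>2) \<le> expectation (\<lambda>\<omega>. HH e k (S \<omega>))"
      using iL mi linf_le_HH[OF e k1] by (intro integral_mono) auto
    then show ?thesis using mi by linarith
  qed
  have main: "expectation (\<lambda>\<omega>. (linf_norm (S \<omega>))\<^sup>2) \<le> C * T"
  proof (rule field_le_epsilon)
    fix d :: real assume d: "d > 0"
    have "d ^ k > 0" using d by simp
    from key[OF this] have "expectation (\<lambda>\<omega>. (linf_norm (S \<omega>))\<^sup>2) \<le> (d^k) powr (1/real k) + C * T" .
    moreover have "(d^k) powr (1/real k) = d" using pow_root[of d k] d k1 by simp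
    ultimately show "expectation (\<lambda>\<omega>. (linf_norm (S \<omega>))\<^sup>2) \<le> C * T + d" by simp
  qed
  have T0: "T \<ge> 0" unfolding T_def
    by (intro sum_nonneg integral_nonneg) auto
  have c1: "c \<ge> 1" unfolding c_def by simp
  have Cb: "C \<le> (1 + 2.9 * sqrt (ln (2 * c)))\<^sup>2"
    unfolding C_def k_def using const_bound[OF c1] .
  have b29: "expectation (\<lambda>\<omega>. (linf_norm (S \<omega>))\<^sup>2) \<le> (1 + 2.9 * sqrt (ln (2 * c)))\<^sup>2 * T"
    using main mult_right_mono[OF Cb T0] by linarith
  have sq0: "sqrt (ln (2 * c)) \<ge> 0" using c1 by simp
  have "(1 + 2.9 * sqrt (ln (2 * c)))\<^sup>2 \<le> (1 + 3.46 * sqrt (ln (2 * c)))\<^sup>2"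
    by (rule power_mono) (use sq0 in auto)
  then have b346: "expectation (\<lambda>\<omega>. (linf_norm (S \<omega>))\<^sup>2) \<le> (1 + 3.46 * sqrt (ln (2 * c)))\<^sup>2 * T"
    using b29 mult_right_mono[OF _ T0] by (meson order_trans)
  show ?thesis using b29 b346 unfolding S_def T_def c_def by simp
qed

end
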